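(* Let $n\ge 1$ and $a=(a_0,\dots,a_n)\in\mathbb{R}^{n+1}$. Then the tropical entropy satisfies $H(a)\le 1-1/n$.
   Context: For an integer $s\ge 0$, let $D_s\subset\mathbb{R}^s$ be the set of vectors $z=(z_1,\dots,z_s)$ satisfying $a$, i.e. such that for every $k$ with $0\le k\le s-1-n$ the minimum $\min_{0\le i\le n}\{a_i+z_{k+1+i}\}$ is attained for at least two different indices $i$. $D_s$ is a polyhedral complex; let $d_s=\dim D_s$. The sequence $d_s$ is subadditive, and the tropical entropy of $a$ is $H(a)=\lim_{s\to\infty} d_s/s$. *)

theory Defs
  imports Complex_Main
begin

text \<open>Vectors z in R^s are represented as functions z :: nat => real with
  coordinates z 1, ..., z s and z i = 0 for all other i.\<close>

definition D_set :: "(nat \<Rightarrow> real) \<Rightarrow> nat \<Rightarrow> nat \<Rightarrow> (nat \<Rightarrow> real) set" where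
  "D_set a n s = {z. (\<forall>i. i \<notin> {1..s} \<longrightarrow> z i = 0) \<and>
     (\<forall>k. k + 1 + n \<le> s \<longrightarrow>
        (\<exists>i j. i \<le> n \<and> j \<le> n \<and> i \<noteq> j \<and>
           a i + z (k + 1 + i) = Min ((\<lambda>l. a l + z (k + 1 + l)) ` {0..n}) \<and>
           a j + z (k + 1 + j) = Min ((\<lambda>l. a l + z (k + 1 + l)) ` {0..n})))}"

definition aff_indep :: "nat \<Rightarrow> (nat \<Rightarrow> nat \<Rightarrow> real) \<Rightarrow> bool" where
  "aff_indep k p \<longleftrightarrow> (\<forall>c :: nat \<Rightarrow> real.
     (\<forall>i. (\<Sum>j\<in>{1..k}. c j * (p j i - p 0 i)) = 0) \<longrightarrow> (\<forall>j\<in>{1..k}. c j = 0))"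

definition hull_in :: "nat \<Rightarrow> (nat \<Rightarrow> nat \<Rightarrow> real) \<Rightarrow> (nat \<Rightarrow> real) set \<Rightarrow> bool" where
  "hull_in k p S \<longleftrightarrow> (\<forall>w :: nat \<Rightarrow> real. (\<forall>j\<le>k. 0 \<le> w j) \<and> (\<Sum>j\<le>k. w j) = 1 \<longrightarrow>
     (\<lambda>i. \<Sum>j\<le>k. w j * p j i) \<in> S)"

text \<open>Dimension of the polyhedral set S (a finite union of closed polyhedra):
  the largest k such that S contains a k-dimensional simplex.\<close>
definition poly_dim :: "(nat \<Rightarrow> real) set \<Rightarrow> nat" where
  "poly_dim S = Sup {k. \<exists>p. aff_indep k p \<and> hull_in k p S}"

definition d_seq :: "(nat \<Rightarrow> real) \<Rightarrow> nat \<Rightarrow> nat \<Rightarrow> nat" where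
  "d_seq a n s = poly_dim (D_set a n s)"

definition tropical_entropy :: "(nat \<Rightarrow> real) \<Rightarrow> nat \<Rightarrow> real" where
  "tropical_entropy a n = lim (\<lambda>s. real (d_seq a n s) / real s)"

end

theory Submission
  imports Defs "HOL-Library.Function_Algebras" "HOL-Library.FuncSet" "HOL-Computational_Algebra.Polynomial"
begin
definition sc :: "real \<Rightarrow> (nat \<Rightarrow> real) \<Rightarrow> (nat \<Rightarrow> real)" where
  "sc c x = (\<lambda>i. c * x i)"

interpretation fv: vector_space sc
  by unfold_locales (auto simp: sc_def fun_eq_iff algebra_simps)

lemma sum_fun_apply: "(\<Sum>x\<in>A. (f x :: nat \<Rightarrow> real)) i = (\<Sum>x\<in>A. f x i)"
  by (induction A rule: infinite_finite_induct) auto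

definition indep :: "nat \<Rightarrow> (nat \<Rightarrow> nat \<Rightarrow> real) \<Rightarrow> bool" where
  "indep k v \<longleftrightarrow> (\<forall>c. (\<forall>i. (\<Sum>j\<in>{1..k}. c j * v j i) = 0) \<longrightarrow> (\<forall>j\<in>{1..k}. c j = 0))"

lemma indep_inj:
  assumes "indep k v" shows "inj_on v {1..k}"
proof (rule inj_onI, rule ccontr)
  fix a b assume ab: "a \<in> {1..k}" "b \<in> {1..k}" "v a = v b" "a \<noteq> b"
  define c where "c = (\<lambda>j. if j = a then (1::real) else if j = b then -1 else 0)"
  have "\<forall>i. (\<Sum>j\<in>{1..k}. c j * v j i) = 0"
  proof
    fix i
    have "(\<Sum>j\<in>{1..k}. c j * v j i) = (\<Sum>j\<in>{1..k}. (if j = a then v a i else 0) + (if j = b then - v b i else 0))"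
      by (rule sum.cong) (auto simp: c_def ab)
    also have "\<dots> = v a i - v b i" using ab by (simp add: sum.distrib)
    finally show "(\<Sum>j\<in>{1..k}. c j * v j i) = 0" using ab by simp
  qed
  then have "c a = 0" using assms ab unfolding indep_def by blast
  then show False by (simp add: c_def)
qed

lemma indep_independent:
  assumes "indep k v" shows "fv.independent (v ` {1..k})"
proof (rule fv.independent_if_scalars_zero)
  show "finite (v ` {1..k})" by simp
  fix f x assume h: "(\<Sum>x\<in>v ` {1..k}. sc (f x) x) = 0" "x \<in> v ` {1..k}"
  have "\<forall>i. (\<Sum>j\<in>{1..k}. f (v j) * v j i) = 0"
  proof
    fix i
    have "(\<Sum>x\<in>v ` {1..k}. sc (f x) x) i = (\<Sum>j\<in>{1..k}. sc (f (v j)) (v j)) i"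
      unfolding sum.reindex[OF indep_inj[OF assms]] by simp
    then have "(\<Sum>j\<in>{1..k}. f (v j) * v j i) = (\<Sum>x\<in>v ` {1..k}. sc (f x) x) i"
      by (simp add: sum_fun_apply sc_def)
    then show "(\<Sum>j\<in>{1..k}. f (v j) * v j i) = 0" using h by simp
  qed
  then have "\<forall>j\<in>{1..k}. f (v j) = 0"
    using assms unfolding indep_def by (elim allE[where x="\<lambda>j. f (v j)"]) simp
  then show "f x = 0" using h by auto
qed

lemma indep_card:
  assumes "indep k v" "finite F" "\<And>j i. j \<in> {1..k} \<Longrightarrow> i \<notin> F \<Longrightarrow> v j i = 0"
  shows "k \<le> card F"
proof -
  define \<delta> where "\<delta> = (\<lambda>c::nat. (\<lambda>i::nat. if i = c then (1::real) else 0))"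
  have sp: "v j \<in> fv.span (\<delta> ` F)" if j: "j \<in> {1..k}" for j
  proof -
    have "v j = (\<Sum>c\<in>F. sc (v j c) (\<delta> c))"
    proof
      fix i
      have "(\<Sum>c\<in>F. sc (v j c) (\<delta> c)) i = (\<Sum>c\<in>F. (if c = i then v j i else 0))"
        by (auto simp: sum_fun_apply sc_def \<delta>_def intro!: sum.cong)
      also have "\<dots> = v j i" using assms(2) assms(3)[OF j, of i] by auto
      finally show "v j i = (\<Sum>c\<in>F. sc (v j c) (\<delta> c)) i" by simp
    qed
    also have "\<dots> \<in> fv.span (\<delta> ` F)"
      by (intro fv.span_sum fv.span_scale fv.span_base) auto
    finally show ?thesis .
  qed
  have "v ` {1..k} \<subseteq> fv.span (\<delta> ` F)" using sp by auto
  then have "card (v ` {1..k}) \<le> card (\<delta> ` F)"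
    using fv.independent_span_bound[OF _ indep_independent[OF assms(1)], of "\<delta> ` F"] assms(2) by auto
  also have "\<dots> \<le> card F" by (rule card_image_le[OF assms(2)])
  finally show ?thesis using card_image[OF indep_inj[OF assms(1)]] by simp
qed

definition Kset :: "(nat \<Rightarrow> real) \<Rightarrow> nat \<Rightarrow> nat \<Rightarrow> nat set" where
  "Kset a n s = {k. \<exists>p. aff_indep k p \<and> hull_in k p (D_set a n s)}"

lemma d_seq_Kset: "d_seq a n s = Sup (Kset a n s)"
  unfolding d_seq_def poly_dim_def Kset_def ..

lemma aff_indep_iff: "aff_indep k p = indep k (\<lambda>j i. p j i - p 0 i)"
  unfolding aff_indep_def indep_def ..

lemma indep_cong: "indep k v \<Longrightarrow> (\<And>j. j \<in> {1..k} \<Longrightarrow> v j = v' j) \<Longrightarrow> indep k v'"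
  unfolding indep_def by (metis (no_types, lifting) sum.cong)

lemma hull_vertex:
  assumes "hull_in k p S" "j \<le> k" shows "p j \<in> S"
proof -
  define w where "w = (\<lambda>j'. if j' = j then (1::real) else 0)"
  have "(\<lambda>i. \<Sum>j'\<le>k. w j' * p j' i) \<in> S"
    using assms(1) unfolding hull_in_def w_def using assms(2) by auto
  moreover have "(\<lambda>i. \<Sum>j'\<le>k. w j' * p j' i) = p j"
  proof
    fix i
    have "(\<Sum>j'\<le>k. w j' * p j' i) = (\<Sum>j'\<le>k. (if j' = j then p j i else 0))"
      by (rule sum.cong) (auto simp: w_def)
    then show "(\<Sum>j'\<le>k. w j' * p j' i) = p j i" using assms(2) by simp
  qed
  ultimately show ?thesis by simp
qed

lemma D_support: "z \<in> D_set a n s \<Longrightarrow> i \<notin> {1..s} \<Longrightarrow> z i = 0"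
  unfolding D_set_def by auto

lemma Kset_bound:
  assumes "k \<in> Kset a n s" shows "k \<le> s"
proof -
  obtain p where p: "aff_indep k p" "hull_in k p (D_set a n s)"
    using assms unfolding Kset_def by auto
  have "k \<le> card {1..s}"
  proof (rule indep_card[OF p(1)[unfolded aff_indep_iff]])
    fix j i assume "j \<in> {1..k}" "i \<notin> {1..s}"
    then show "p j i - p 0 i = 0"
      using D_support[OF hull_vertex[OF p(2)]] by auto
  qed auto
  then show ?thesis by simp
qed

lemma Kset_finite: "finite (Kset a n s)"
  using Kset_bound by (meson finite_atMost finite_subset subsetI atMost_iff)

lemma Kset_le_d: "k \<in> Kset a n s \<Longrightarrow> k \<le> d_seq a n s"
  unfolding d_seq_Kset by (rule cSup_upper) (auto intro: bdd_above_finite Kset_finite)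

lemma d_in_Kset: "Kset a n s \<noteq> {} \<Longrightarrow> d_seq a n s \<in> Kset a n s"
  unfolding d_seq_Kset using cSup_eq_Max[OF Kset_finite] Max_in[OF Kset_finite] by simp

lemma d_le_s: "d_seq a n s \<le> s"
proof (cases "Kset a n s = {}")
  case True then show ?thesis by (simp add: d_seq_Kset)
next
  case False then show ?thesis using d_in_Kset Kset_bound by blast
qed

definition sel :: "(nat \<Rightarrow> bool) \<Rightarrow> (nat \<Rightarrow> nat) \<Rightarrow> (nat \<Rightarrow> real) \<Rightarrow> (nat \<Rightarrow> real)" where
  "sel P f x = (\<lambda>i. if P i then x (f i) else 0)"

lemma hull_in_map:
  assumes "hull_in k p S" "\<And>z. z \<in> S \<Longrightarrow> sel P f z \<in> S'"
  shows "hull_in k (\<lambda>j. sel P f (p j)) S'"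
  unfolding hull_in_def
proof (intro allI impI)
  fix w :: "nat \<Rightarrow> real" assume w: "(\<forall>j\<le>k. 0 \<le> w j) \<and> (\<Sum>j\<le>k. w j) = 1"
  have "(\<lambda>i. \<Sum>j\<le>k. w j * p j i) \<in> S" using assms(1) w unfolding hull_in_def by blast
  then have "sel P f (\<lambda>i. \<Sum>j\<le>k. w j * p j i) \<in> S'" by (rule assms(2))
  moreover have "sel P f (\<lambda>i. \<Sum>j\<le>k. w j * p j i) = (\<lambda>i. \<Sum>j\<le>k. w j * sel P f (p j) i)"
    by (auto simp: sel_def fun_eq_iff)
  ultimately show "(\<lambda>i. \<Sum>j\<le>k. w j * sel P f (p j) i) \<in> S'" by simp
qed

lemma hull_in_reindex:
  assumes "hull_in k p S" "inj_on J {..r}" "J ` {..r} \<subseteq> {..k}"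
  shows "hull_in r (\<lambda>i. p (J i)) S"
  unfolding hull_in_def
proof (intro allI impI)
  fix w :: "nat \<Rightarrow> real" assume w: "(\<forall>j\<le>r. 0 \<le> w j) \<and> (\<Sum>j\<le>r. w j) = 1"
  define w' where "w' = (\<lambda>j. if j \<in> J ` {..r} then w (the_inv_into {..r} J j) else 0)"
  have w'J: "w' (J i) = w i" if "i \<le> r" for i
    using that assms(2) by (auto simp: w'_def the_inv_into_f_f)
  have sw: "(\<Sum>j\<le>k. w' j * g j) = (\<Sum>i\<le>r. w i * g (J i))" for g :: "nat \<Rightarrow> real"
  proof -
    have "(\<Sum>j\<le>k. w' j * g j) = (\<Sum>j\<in>J ` {..r}. w' j * g j)"
    proof (rule sum.mono_neutral_right)
      show "\<forall>i\<in>{..k} - J ` {..r}. w' i * g i = 0" by (auto simp: w'_def)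
    qed (use assms(3) in auto)
    also have "\<dots> = (\<Sum>i\<le>r. w' (J i) * g (J i))"
      by (simp add: sum.reindex[OF assms(2)])
    also have "\<dots> = (\<Sum>i\<le>r. w i * g (J i))" by (rule sum.cong) (auto simp: w'J)
    finally show ?thesis .
  qed
  have "(\<forall>j\<le>k. 0 \<le> w' j) \<and> (\<Sum>j\<le>k. w' j) = 1"
    using w sw[of "\<lambda>_. 1"] assms(2) by (auto simp: w'_def the_inv_into_f_f)
  then have "(\<lambda>i. \<Sum>j\<le>k. w' j * p j i) \<in> S" using assms(1) unfolding hull_in_def by blast
  moreover have "(\<lambda>i. \<Sum>j\<le>k. w' j * p j i) = (\<lambda>i'. \<Sum>i\<le>r. w i * p (J i) i')"
    using sw by simp
  ultimately show "(\<lambda>i'. \<Sum>i\<le>r. w i * p (J i) i') \<in> S" by simp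
qed

lemma indep_enum:
  assumes "fv.independent B" "bij_betw h {0..<r} B"
  shows "indep r (\<lambda>i. h (i - 1))"
  unfolding indep_def
proof (intro allI impI ballI)
  fix c :: "nat \<Rightarrow> real" and j assume c: "\<forall>i. (\<Sum>j\<in>{1..r}. c j * h (j - 1) i) = 0" and j: "j \<in> {1..r}"
  define u where "u = (\<lambda>b. c (inv_into {0..<r} h b + 1))"
  have inj: "inj_on h {0..<r}" and im: "h ` {0..<r} = B" using assms(2) by (auto simp: bij_betw_def)
  have fin: "finite B" using im by auto
  have "(\<Sum>b\<in>B. sc (u b) b) = 0"
  proof
    fix i
    have "(\<Sum>b\<in>B. sc (u b) b) i = (\<Sum>b\<in>h ` {0..<r}. u b * b i)" by (simp add: sum_fun_apply sc_def im)
    also have "\<dots> = (\<Sum>l\<in>{0..<r}. u (h l) * h l i)" by (simp add: sum.reindex[OF inj])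
    also have "\<dots> = (\<Sum>l\<in>{0..<r}. c (l + 1) * h l i)"
      by (rule sum.cong) (auto simp: u_def inv_into_f_f[OF inj])
    also have "\<dots> = (\<Sum>j\<in>{1..r}. c j * h (j - 1) i)"
      by (rule sum.reindex_bij_witness[of _ "\<lambda>j. j - 1" Suc]) auto
    finally show "(\<Sum>b\<in>B. sc (u b) b) i = 0 i" using c by simp
  qed
  moreover have "h (j - 1) \<in> B" using j im by auto
  ultimately have "u (h (j - 1)) = 0" using fv.independentD[OF assms(1) fin] by blast
  moreover have "u (h (j - 1)) = c j" using j by (auto simp: u_def inv_into_f_f[OF inj])
  ultimately show "c j = 0" by simp
qed

lemma sub_simplex:
  assumes hull: "hull_in k p S" and map: "\<And>z. z \<in> S \<Longrightarrow> sel P f z \<in> S'"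
    and Bsub: "B \<subseteq> (\<lambda>j. sel P f (p j) - sel P f (p 0)) ` {1..k}" and ind: "fv.independent B"
  shows "\<exists>q. aff_indep (card B) q \<and> hull_in (card B) q S'"
proof -
  define V where "V = (\<lambda>j. sel P f (p j) - sel P f (p 0))"
  have fin: "finite B" using Bsub finite_surj by blast
  obtain h where h: "bij_betw h {0..<card B} B" using ex_bij_betw_nat_finite[OF fin] by blast
  define r where "r = card B"
  have inj: "inj_on h {0..<r}" and im: "h ` {0..<r} = B" using h by (auto simp: bij_betw_def r_def)
  define g where "g = (\<lambda>b. SOME j. j \<in> {1..k} \<and> b = V j)"
  have g: "g b \<in> {1..k} \<and> b = V (g b)" if "b \<in> B" for b
  proof -
    have "\<exists>j. j \<in> {1..k} \<and> b = V j" using that Bsub unfolding V_def by blast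
    then show ?thesis unfolding g_def by (rule someI_ex)
  qed
  define J where "J = (\<lambda>i. if i = 0 then 0 else g (h (i - 1)))"
  define q where "q = (\<lambda>i. sel P f (p (J i)))"
  have hB: "h (i - 1) \<in> B" if "i \<in> {1..r}" for i using that im by force
  have "indep r (\<lambda>i. h (i - 1))" using indep_enum[OF ind h] by (simp add: r_def)
  then have "indep r (\<lambda>j i. q j i - q 0 i)"
  proof (rule indep_cong)
    fix j assume j: "j \<in> {1..r}"
    have "h (j - 1) = V (g (h (j - 1)))" using g[OF hB[OF j]] by simp
    then show "h (j - 1) = (\<lambda>i. q j i - q 0 i)" using j by (simp add: V_def q_def J_def fun_diff_def)
  qed
  then have ai: "aff_indep r q" by (simp add: aff_indep_iff)
  have Jpos: "J i \<in> {1..k}" if "i \<in> {1..r}" for i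
    using g[OF hB[OF that]] that by (simp add: J_def)
  have injJ: "inj_on J {..r}"
  proof (rule inj_onI)
    fix x y assume x: "x \<in> {..r}" and y: "y \<in> {..r}" and e: "J x = J y"
    show "x = y"
    proof (cases "x = 0 \<or> y = 0")
      case True
      then show ?thesis using e x y Jpos[of x] Jpos[of y] by (cases "x = 0"; cases "y = 0") (auto simp: J_def)
    next
      case False
      then have xs: "x \<in> {1..r}" "y \<in> {1..r}" using x y by auto
      have "g (h (x - 1)) = g (h (y - 1))" using e False by (simp add: J_def)
      then have "h (x - 1) = h (y - 1)" using g[OF hB[OF xs(1)]] g[OF hB[OF xs(2)]] by metis
      then have "x - 1 = y - 1" using inj xs by (auto dest: inj_onD)
      then show ?thesis using xs by auto
    qed
  qed
  have Jim: "J ` {..r} \<subseteq> {..k}"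
  proof
    fix x assume "x \<in> J ` {..r}"
    then obtain i where "i \<le> r" "x = J i" by auto
    then show "x \<in> {..k}" using Jpos[of i] by (cases "i = 0") (auto simp: J_def)
  qed
  have "hull_in r (\<lambda>i. sel P f (p (J i))) S'"
    by (rule hull_in_reindex[OF hull_in_map[OF hull map] injJ Jim])
  then show ?thesis using ai unfolding q_def r_def by blast
qed

lemma sel_span:
  assumes "x \<in> fv.span X" shows "sel P f x \<in> fv.span (sel P f ` X)"
  using assms
proof (induction rule: fv.span_induct_alt)
  case base
  have "sel P f 0 = 0" by (simp add: sel_def fun_eq_iff)
  then show ?case by (metis fv.span_zero)
next
  case (step c x y)
  have "sel P f (sc c x + y) = sc c (sel P f x) + sel P f y"
    by (simp add: sel_def sc_def fun_eq_iff)
  then show ?case using step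
    by (metis fv.span_add fv.span_scale fv.span_base imageI)
qed

lemma D_window:
  assumes "z \<in> D_set a n s" "k + 1 + n \<le> s"
  shows "\<exists>i j. i \<le> n \<and> j \<le> n \<and> i \<noteq> j \<and>
           a i + z (k + 1 + i) = Min ((\<lambda>l. a l + z (k + 1 + l)) ` {0..n}) \<and>
           a j + z (k + 1 + j) = Min ((\<lambda>l. a l + z (k + 1 + l)) ` {0..n})"
proof -
  have "\<forall>k. k + 1 + n \<le> s \<longrightarrow> (\<exists>i j. i \<le> n \<and> j \<le> n \<and> i \<noteq> j \<and>
           a i + z (k + 1 + i) = Min ((\<lambda>l. a l + z (k + 1 + l)) ` {0..n}) \<and>
           a j + z (k + 1 + j) = Min ((\<lambda>l. a l + z (k + 1 + l)) ` {0..n}))"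
    using assms(1) unfolding D_set_def mem_Collect_eq by (rule conjunct2)
  then show ?thesis using assms(2) by blast
qed

lemma proj1_D:
  assumes z: "z \<in> D_set a n (s + t)" shows "sel (\<lambda>i. i \<le> s) id z \<in> D_set a n s"
  unfolding D_set_def mem_Collect_eq
proof (intro conjI allI impI)
  fix i assume "i \<notin> {1..s}"
  then show "sel (\<lambda>i. i \<le> s) id z i = 0" using D_support[OF z, of 0] by (cases i) (auto simp: sel_def)
next
  fix k assume k: "k + 1 + n \<le> s"
  have eq: "sel (\<lambda>i. i \<le> s) id z (k + 1 + l) = z (k + 1 + l)" if "l \<le> n" for l
    using k that by (simp add: sel_def)
  have im: "(\<lambda>l. a l + sel (\<lambda>i. i \<le> s) id z (k + 1 + l)) ` {0..n} = (\<lambda>l. a l + z (k + 1 + l)) ` {0..n}"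
    by (rule image_cong, rule refl, subst eq, auto)
  have "k + 1 + n \<le> s + t" using k by simp
  from D_window[OF z this] obtain i j where ij: "i \<le> n" "j \<le> n" "i \<noteq> j"
    "a i + z (k + 1 + i) = Min ((\<lambda>l. a l + z (k + 1 + l)) ` {0..n})"
    "a j + z (k + 1 + j) = Min ((\<lambda>l. a l + z (k + 1 + l)) ` {0..n})"
    by blast
  then show "\<exists>i j. i \<le> n \<and> j \<le> n \<and> i \<noteq> j \<and>
           a i + sel (\<lambda>i. i \<le> s) id z (k + 1 + i) = Min ((\<lambda>l. a l + sel (\<lambda>i. i \<le> s) id z (k + 1 + l)) ` {0..n}) \<and>
           a j + sel (\<lambda>i. i \<le> s) id z (k + 1 + j) = Min ((\<lambda>l. a l + sel (\<lambda>i. i \<le> s) id z (k + 1 + l)) ` {0..n})"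
    by (intro exI[of _ i] exI[of _ j]) (simp only: im eq[OF ij(1)] eq[OF ij(2)] ij)
qed

lemma proj2_D:
  assumes z: "z \<in> D_set a n (s + t)" shows "sel (\<lambda>i. 1 \<le> i) (\<lambda>i. i + s) z \<in> D_set a n t"
  unfolding D_set_def mem_Collect_eq
proof (intro conjI allI impI)
  fix i assume "i \<notin> {1..t}"
  then show "sel (\<lambda>i. 1 \<le> i) (\<lambda>i. i + s) z i = 0" using D_support[OF z, of "i + s"] by (auto simp: sel_def)
next
  fix k assume k: "k + 1 + n \<le> t"
  have eq: "sel (\<lambda>i. 1 \<le> i) (\<lambda>i. i + s) z (k + 1 + l) = z ((k + s) + 1 + l)" for l
    by (simp add: sel_def ac_simps)
  have im: "(\<lambda>l. a l + sel (\<lambda>i. 1 \<le> i) (\<lambda>i. i + s) z (k + 1 + l)) ` {0..n} = (\<lambda>l. a l + z ((k + s) + 1 + l)) ` {0..n}"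
    by (rule image_cong, rule refl, simp only: eq)
  have "(k + s) + 1 + n \<le> s + t" using k by simp
  from D_window[OF z this] obtain i j where "i \<le> n" "j \<le> n" "i \<noteq> j"
    "a i + z ((k + s) + 1 + i) = Min ((\<lambda>l. a l + z ((k + s) + 1 + l)) ` {0..n})"
    "a j + z ((k + s) + 1 + j) = Min ((\<lambda>l. a l + z ((k + s) + 1 + l)) ` {0..n})"
    by blast
  then show "\<exists>i j. i \<le> n \<and> j \<le> n \<and> i \<noteq> j \<and>
           a i + sel (\<lambda>i. 1 \<le> i) (\<lambda>i. i + s) z (k + 1 + i) = Min ((\<lambda>l. a l + sel (\<lambda>i. 1 \<le> i) (\<lambda>i. i + s) z (k + 1 + l)) ` {0..n}) \<and>
           a j + sel (\<lambda>i. 1 \<le> i) (\<lambda>i. i + s) z (k + 1 + j) = Min ((\<lambda>l. a l + sel (\<lambda>i. 1 \<le> i) (\<lambda>i. i + s) z (k + 1 + l)) ` {0..n})"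
    by (intro exI[of _ i] exI[of _ j]) (simp only: im eq, simp)
qed

lemma d_subadd: "d_seq a n (s + t) \<le> d_seq a n s + d_seq a n t"
proof (cases "Kset a n (s + t) = {}")
  case True then show ?thesis by (simp add: d_seq_Kset)
next
  case False
  define k where "k = d_seq a n (s + t)"
  have "k \<in> Kset a n (s + t)" using d_in_Kset[OF False] by (simp add: k_def)
  then obtain p where ai: "aff_indep k p" and hull: "hull_in k p (D_set a n (s + t))"
    unfolding Kset_def by auto
  define L1 where "L1 = sel (\<lambda>i. i \<le> s) id"
  define L2 where "L2 = sel (\<lambda>i. 1 \<le> i) (\<lambda>i. i + s)"
  define U where "U = sel (\<lambda>i. s < i) (\<lambda>i. i - s)"
  have ind: "indep k (\<lambda>j. p j - p 0)"
    using ai unfolding aff_indep_iff by (simp add: fun_diff_def)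
  define V0 where "V0 = (\<lambda>j. p j - p 0) ` {1..k}"
  have cV0: "card V0 = k" unfolding V0_def using card_image[OF indep_inj[OF ind]] by simp
  have iV0: "fv.independent V0" unfolding V0_def by (rule indep_independent[OF ind])
  obtain B1 where B1: "B1 \<subseteq> (\<lambda>j. L1 (p j) - L1 (p 0)) ` {1..k}" "fv.independent B1"
    "(\<lambda>j. L1 (p j) - L1 (p 0)) ` {1..k} \<subseteq> fv.span B1"
    using fv.maximal_independent_subset by metis
  obtain B2 where B2: "B2 \<subseteq> (\<lambda>j. L2 (p j) - L2 (p 0)) ` {1..k}" "fv.independent B2"
    "(\<lambda>j. L2 (p j) - L2 (p 0)) ` {1..k} \<subseteq> fv.span B2"
    using fv.maximal_independent_subset by metis
  have f1: "finite B1" using B1(1) finite_surj by blast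
  have f2: "finite B2" using B2(1) finite_surj by blast
  have "\<exists>q. aff_indep (card B1) q \<and> hull_in (card B1) q (D_set a n s)"
    by (rule sub_simplex[OF hull proj1_D B1(1)[unfolded L1_def] B1(2)])
  then have "card B1 \<in> Kset a n s" by (simp add: Kset_def)
  then have c1: "card B1 \<le> d_seq a n s" by (rule Kset_le_d)
  have "\<exists>q. aff_indep (card B2) q \<and> hull_in (card B2) q (D_set a n t)"
    by (rule sub_simplex[OF hull proj2_D B2(1)[unfolded L2_def] B2(2)])
  then have "card B2 \<in> Kset a n t" by (simp add: Kset_def)
  then have c2: "card B2 \<le> d_seq a n t" by (rule Kset_le_d)
  have "V0 \<subseteq> fv.span (B1 \<union> U ` B2)"
  proof
    fix v assume "v \<in> V0"
    then obtain j where j: "j \<in> {1..k}" "v = p j - p 0" unfolding V0_def by auto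
    have dec: "v = (L1 (p j) - L1 (p 0)) + U (L2 (p j) - L2 (p 0))"
    proof (rule ext)
      fix i show "v i = ((L1 (p j) - L1 (p 0)) + U (L2 (p j) - L2 (p 0))) i"
        by (cases "s < i") (auto simp: j L1_def L2_def U_def sel_def)
    qed
    have "L1 (p j) - L1 (p 0) \<in> fv.span B1" using B1(3) j by auto
    then have m1: "L1 (p j) - L1 (p 0) \<in> fv.span (B1 \<union> U ` B2)"
      using fv.span_mono[of B1 "B1 \<union> U ` B2"] by blast
    have "L2 (p j) - L2 (p 0) \<in> fv.span B2" using B2(3) j by auto
    then have "U (L2 (p j) - L2 (p 0)) \<in> fv.span (U ` B2)" unfolding U_def by (rule sel_span)
    then have m2: "U (L2 (p j) - L2 (p 0)) \<in> fv.span (B1 \<union> U ` B2)"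
      using fv.span_mono[of "U ` B2" "B1 \<union> U ` B2"] by blast
    show "v \<in> fv.span (B1 \<union> U ` B2)" using dec m1 m2 fv.span_add by metis
  qed
  moreover have "finite (B1 \<union> U ` B2)" using f1 f2 by simp
  ultimately have "card V0 \<le> card (B1 \<union> U ` B2)"
    using fv.independent_span_bound[OF _ iV0, of "B1 \<union> U ` B2"] by simp
  also have "\<dots> \<le> card B1 + card (U ` B2)" by (rule card_Un_le)
  also have "\<dots> \<le> card B1 + card B2" using card_image_le[OF f2] by simp
  finally have "k \<le> card B1 + card B2" using cV0 by simp
  then show ?thesis using c1 c2 unfolding k_def by linarith
qed

lemma subadd_iter:
  fixes u :: "nat \<Rightarrow> real"
  assumes sub: "\<And>s t. u (s + t) \<le> u s + u t"
  shows "u (q * m + r) \<le> real q * u m + u r"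
proof (induction q)
  case 0 then show ?case by simp
next
  case (Suc q)
  have "u (Suc q * m + r) = u (m + (q * m + r))" by (simp add: algebra_simps)
  also have "\<dots> \<le> u m + u (q * m + r)" by (rule sub)
  also have "\<dots> \<le> u m + (real q * u m + u r)" using Suc by simp
  finally show ?case by (simp add: algebra_simps)
qed

lemma fekete:
  fixes u :: "nat \<Rightarrow> real"
  assumes sub: "\<And>s t. u (s + t) \<le> u s + u t" and nonneg: "\<And>s. 0 \<le> u s"
    and bnd: "\<And>s. u s \<le> real s"
  shows "(\<lambda>s. u s / real s) \<longlonglongrightarrow> Inf ((\<lambda>s. u s / real s) ` {1..})"
proof (rule LIMSEQ_I)
  define L where "L = Inf ((\<lambda>s. u s / real s) ` {1..})"
  have bdd: "bdd_below ((\<lambda>s. u s / real s) ` {1..})"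
    by (rule bdd_belowI[of _ 0]) (auto intro: divide_nonneg_nonneg nonneg)
  fix r :: real assume r: "0 < r"
  have "\<exists>x\<in>(\<lambda>s. u s / real s) ` {1..}. x < L + r / 2"
    using cInf_less_iff[OF _ bdd, of "L + r / 2"] r unfolding L_def by auto
  then obtain m where m: "m \<ge> 1" "u m / real m < L + r / 2" by auto
  obtain N0 :: nat where N0: "2 * real m / r < real N0" using reals_Archimedean2 by blast
  show "\<exists>no. \<forall>s\<ge>no. norm (u s / real s - Inf ((\<lambda>s. u s / real s) ` {1..})) < r"
  proof (intro exI[of _ "N0 + 1"] allI impI)
    fix s assume s: "N0 + 1 \<le> s"
    then have s1: "s \<ge> 1" and sp: "real s > 0" by auto
    have low: "L \<le> u s / real s" unfolding L_def by (rule cInf_lower[OF _ bdd]) (use s1 in auto)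
    define q where "q = s div m"
    define t where "t = s mod m"
    have sdec: "s = q * m + t" by (simp add: q_def t_def)
    have tm: "t < m" using m(1) by (simp add: t_def)
    have "u s \<le> real q * u m + u t" using subadd_iter[OF sub, of q m t] sdec by simp
    also have "\<dots> \<le> real q * u m + real m" using bnd[of t] tm by simp
    finally have us: "u s \<le> real q * u m + real m" .
    have qm: "real q * real m \<le> real s" using sdec by (metis le_add1 of_nat_le_iff of_nat_mult)
    have "real q * u m = (real q * real m) * (u m / real m)" using m(1) by simp
    also have "\<dots> \<le> real s * (u m / real m)"
      by (rule mult_right_mono[OF qm]) (auto intro: divide_nonneg_nonneg nonneg)
    finally have "u s \<le> real s * (u m / real m) + real m" using us by simp
    then have "u s / real s \<le> u m / real m + real m / real s" using sp by (simp add: field_simps)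
    moreover have "real m / real s < r / 2"
    proof -
      have "2 * real m < r * real s" using N0 s r
        by (smt (verit, ccfv_SIG) divide_less_eq mult.commute of_nat_add of_nat_le_iff of_nat_1 mult_left_mono)
      then show ?thesis using sp by (simp add: field_simps)
    qed
    ultimately have "u s / real s < L + r" using m(2) by linarith
    then show "norm (u s / real s - Inf ((\<lambda>s. u s / real s) ` {1..})) < r"
      using low unfolding L_def by simp
  qed
qed

lemma vandermonde_zero:
  fixes ts :: "nat \<Rightarrow> real"
  assumes inj: "inj_on ts {..k}" and eq: "\<And>j. j \<le> k \<Longrightarrow> (\<Sum>r\<le>k. c r * ts r ^ j) = 0"
    and r0: "r0 \<le> k"
  shows "c r0 = 0"
proof -
  have polyz: "(\<Sum>r\<le>k. c r * poly Q (ts r)) = 0" if dQ: "degree Q \<le> k" for Q :: "real poly"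
  proof -
    have "(\<Sum>r\<le>k. c r * poly Q (ts r)) = (\<Sum>r\<le>k. \<Sum>j\<le>degree Q. coeff Q j * (c r * ts r ^ j))"
      by (simp add: poly_altdef sum_distrib_left algebra_simps)
    also have "\<dots> = (\<Sum>j\<le>degree Q. coeff Q j * (\<Sum>r\<le>k. c r * ts r ^ j))"
      by (subst sum.swap) (simp add: sum_distrib_left)
    also have "\<dots> = 0" using eq dQ by simp
    finally show ?thesis .
  qed
  define P where "P = (\<Prod>r\<in>{..k} - {r0}. [:- ts r, 1:])"
  have "degree P \<le> (\<Sum>r\<in>{..k} - {r0}. degree [:- ts r, 1:])"
    unfolding P_def using degree_prod_sum_le[of "{..k} - {r0}" "\<lambda>r. [:- ts r, 1:]"] by (simp add: o_def)
  also have "\<dots> = card ({..k} - {r0})" by simp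
  also have "\<dots> \<le> k" using r0 by simp
  finally have dP: "degree P \<le> k" .
  have pv: "poly P x = (\<Prod>r\<in>{..k} - {r0}. x - ts r)" for x
    unfolding P_def by (simp add: poly_prod)
  have "(\<Sum>r\<le>k. c r * poly P (ts r)) = (\<Sum>r\<le>k. if r = r0 then c r0 * poly P (ts r0) else 0)"
  proof (rule sum.cong)
    fix r assume r: "r \<in> {..k}"
    show "c r * poly P (ts r) = (if r = r0 then c r0 * poly P (ts r0) else 0)"
    proof (cases "r = r0")
      case False
      then have "poly P (ts r) = 0" unfolding pv using r by (intro prod_zero) auto
      then show ?thesis using False by simp
    qed simp
  qed simp
  also have "\<dots> = c r0 * poly P (ts r0)" using r0 by simp
  finally have "c r0 * poly P (ts r0) = 0" using polyz[OF dP] by simp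
  moreover have "poly P (ts r0) \<noteq> 0"
    unfolding pv using inj r0 by (auto simp: prod_zero_iff inj_on_def)
  ultimately show ?thesis by simp
qed

lemma split0: "(\<Sum>j\<le>(k::nat). f j) = f 0 + (\<Sum>j\<in>{1..k}. (f j :: 'a::comm_monoid_add))"
proof -
  have "{..k} = insert 0 {1..k}" by auto
  then show ?thesis by simp
qed

definition Wt :: "nat \<Rightarrow> real \<Rightarrow> nat \<Rightarrow> real" where
  "Wt k t j = (if j = 0 then 1 - (\<Sum>l\<in>{1..k}. t ^ l) / real k else t ^ j / real k)"

definition yt :: "nat \<Rightarrow> (nat \<Rightarrow> nat \<Rightarrow> real) \<Rightarrow> real \<Rightarrow> nat \<Rightarrow> real" where
  "yt k p t = (\<lambda>i. \<Sum>j\<le>k. Wt k t j * p j i)"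

lemma Wt_pos: "j \<in> {1..k} \<Longrightarrow> Wt k t j = t ^ j / real k"
  by (simp add: Wt_def)

lemma yt_expand: "yt k p t i = p 0 i + (\<Sum>j\<in>{1..k}. t ^ j / real k * (p j i - p 0 i))"
proof -
  have "yt k p t i = Wt k t 0 * p 0 i + (\<Sum>j\<in>{1..k}. t ^ j / real k * p j i)"
    unfolding yt_def split0[of "\<lambda>j. Wt k t j * p j i"] by (simp add: Wt_pos)
  also have "Wt k t 0 = 1 - (\<Sum>j\<in>{1..k}. t ^ j / real k)"
    by (simp add: Wt_def sum_divide_distrib)
  also have "(1 - (\<Sum>j\<in>{1..k}. t ^ j / real k)) * p 0 i + (\<Sum>j\<in>{1..k}. t ^ j / real k * p j i)
      = p 0 i + ((\<Sum>j\<in>{1..k}. t ^ j / real k * p j i) - (\<Sum>j\<in>{1..k}. t ^ j / real k) * p 0 i)"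
    by (simp add: algebra_simps)
  also have "(\<Sum>j\<in>{1..k}. t ^ j / real k) * p 0 i = (\<Sum>j\<in>{1..k}. t ^ j / real k * p 0 i)"
    by (rule sum_distrib_right)
  also have "(\<Sum>j\<in>{1..k}. t ^ j / real k * p j i) - (\<Sum>j\<in>{1..k}. t ^ j / real k * p 0 i)
      = (\<Sum>j\<in>{1..k}. t ^ j / real k * (p j i - p 0 i))"
    by (simp only: sum_subtractf[symmetric] right_diff_distrib)
  finally show ?thesis .
qed

lemma yt_diff: "yt k p t i - yt k p t' i = (\<Sum>j\<in>{1..k}. ((t ^ j - t' ^ j) / real k) * (p j i - p 0 i))"
  unfolding yt_expand by (simp add: sum_subtractf[symmetric] diff_divide_distrib left_diff_distrib)

lemma yt_hull:
  assumes "k \<ge> 1" "hull_in k p S" "0 < t" "t \<le> 1"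
  shows "yt k p t \<in> S"
proof -
  have s1: "(\<Sum>l\<in>{1..k}. t ^ l) \<le> real k"
  proof -
    have "(\<Sum>l\<in>{1..k}. t ^ l) \<le> (\<Sum>l\<in>{1..k}. 1)"
      by (rule sum_mono) (use assms in \<open>auto intro: power_le_one\<close>)
    then show ?thesis by simp
  qed
  have kp: "real k > 0" using assms(1) by simp
  have "\<forall>j\<le>k. 0 \<le> Wt k t j"
    using s1 kp assms(3) by (auto simp: Wt_def)
  moreover have "(\<Sum>j\<le>k. Wt k t j) = 1"
  proof -
    have "(\<Sum>j\<le>k. Wt k t j) = Wt k t 0 + (\<Sum>j\<in>{1..k}. t ^ j / real k)"
      by (simp add: split0 Wt_pos)
    then show ?thesis by (simp add: Wt_def sum_divide_distrib)
  qed
  ultimately show ?thesis using assms(2) unfolding hull_in_def yt_def by blast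
qed

lemma D_pair:
  assumes "y \<in> D_set a n s" "m * n + 1 + n \<le> s"
  shows "\<exists>ij. fst ij < snd ij \<and> snd ij \<le> n \<and>
     a (fst ij) + y (m * n + 1 + fst ij) = a (snd ij) + y (m * n + 1 + snd ij)"
proof -
  from D_window[OF assms] obtain i j where ij: "i \<le> n" "j \<le> n" "i \<noteq> j"
    "a i + y (m * n + 1 + i) = Min ((\<lambda>l. a l + y (m * n + 1 + l)) ` {0..n})"
    "a j + y (m * n + 1 + j) = Min ((\<lambda>l. a l + y (m * n + 1 + l)) ` {0..n})"
    by blast
  then have eq: "a i + y (m * n + 1 + i) = a j + y (m * n + 1 + j)" by simp
  show ?thesis
  proof (cases "i < j")
    case True then show ?thesis using ij eq by (intro exI[of _ "(i, j)"]) simp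
  next
    case False then have "j < i" using ij by simp
    then show ?thesis using ij eq by (intro exI[of _ "(j, i)"]) simp
  qed
qed

definition pat :: "(nat \<Rightarrow> real) \<Rightarrow> nat \<Rightarrow> nat \<Rightarrow> (nat \<Rightarrow> real) \<Rightarrow> nat \<Rightarrow> nat \<times> nat" where
  "pat a n M y = (\<lambda>m. if m < M then (SOME ij. fst ij < snd ij \<and> snd ij \<le> n \<and>
     a (fst ij) + y (m * n + 1 + fst ij) = a (snd ij) + y (m * n + 1 + snd ij)) else undefined)"

lemma pat_prop:
  assumes "y \<in> D_set a n (M * n + 1)" "m < M"
  shows "fst (pat a n M y m) < snd (pat a n M y m) \<and> snd (pat a n M y m) \<le> n \<and>
     a (fst (pat a n M y m)) + y (m * n + 1 + fst (pat a n M y m)) =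
     a (snd (pat a n M y m)) + y (m * n + 1 + snd (pat a n M y m))"
proof -
  have "(m + 1) * n \<le> M * n" using assms(2) by (intro mult_le_mono1) simp
  then have "m * n + 1 + n \<le> M * n + 1" by simp
  from someI_ex[OF D_pair[OF assms(1) this]] show ?thesis using assms(2) by (simp add: pat_def)
qed

lemma pat_PiE:
  assumes "y \<in> D_set a n (M * n + 1)"
  shows "pat a n M y \<in> PiE {..<M} (\<lambda>_. {..n} \<times> {..n})"
  unfolding PiE_iff
proof (intro conjI ballI)
  fix m assume "m \<in> {..<M}"
  then show "pat a n M y m \<in> {..n} \<times> {..n}" using pat_prop[OF assms, of m]
    by (cases "pat a n M y m") auto
next
  show "pat a n M y \<in> extensional {..<M}" by (auto simp: pat_def extensional_def)
qed

lemma d_bound: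
  assumes n1: "1 \<le> n"
  shows "d_seq a n (M * n + 1) + M \<le> M * n + 1"
proof (cases "Kset a n (M * n + 1) = {}")
  case True
  have "M \<le> M * n" using n1 by simp
  moreover have "d_seq a n (M * n + 1) = 0" by (simp only: d_seq_Kset True Sup_nat_empty)
  ultimately show ?thesis by linarith
next
  case False
  define s where "s = M * n + 1"
  define k where "k = d_seq a n s"
  have "k \<in> Kset a n s" using d_in_Kset[OF False] by (simp add: k_def s_def)
  then obtain p where ai: "aff_indep k p" and hull: "hull_in k p (D_set a n s)"
    unfolding Kset_def by auto
  have "M \<le> M * n" using n1 by simp
  then have Ms: "M \<le> s" unfolding s_def by linarith
  have "k + M \<le> s"
  proof (cases "k = 0")
    case True then show ?thesis using Ms by simp
  next
    case False
    then have k1: "k \<ge> 1" by simp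
    have kp: "real k > 0" using k1 by simp
    define T where "T = {0<..(1::real)}"
    have yD: "yt k p t \<in> D_set a n s" if "t \<in> T" for t
      using yt_hull[OF k1 hull] that by (auto simp: T_def)
    define f where "f = (\<lambda>t. pat a n M (yt k p t))"
    have "f ` T \<subseteq> PiE {..<M} (\<lambda>_. {..n} \<times> {..n})"
      using pat_PiE yD unfolding f_def s_def by blast
    then have finf: "finite (f ` T)" by (rule finite_subset) (simp add: finite_PiE)
    have infT: "\<not> finite T" by (simp add: T_def)
    obtain t0 where t0: "t0 \<in> T" "\<not> finite {t \<in> T. f t = f t0}"
      using pigeonhole_infinite[OF infT finf] by blast
    define \<sigma> where "\<sigma> = f t0"
    obtain B where B: "finite B" "card B = k + 1" "B \<subseteq> {t \<in> T. f t = \<sigma>}"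
      using infinite_arbitrarily_large[OF t0(2)] unfolding \<sigma>_def by blast
    obtain ts where ts: "bij_betw ts {0..<k + 1} B"
      using ex_bij_betw_nat_finite[OF B(1)] B(2) by metis
    have tsB: "ts r \<in> B" if "r \<le> k" for r using bij_betwE[OF ts] that by auto
    have tsT: "ts r \<in> T" and tsf: "f (ts r) = \<sigma>" if "r \<le> k" for r
      using tsB[OF that] B(3) by auto
    have ts0T: "ts 0 \<in> T" and ts0f: "f (ts 0) = \<sigma>" using tsT[of 0] tsf[of 0] by auto
    have yDs: "yt k p t \<in> D_set a n (M * n + 1)" if "t \<in> T" for t
      using yD[OF that] by (simp add: s_def)
    have tsinj: "inj_on ts {..k}"
      using ts by (simp add: bij_betw_def atLeast0LessThan lessThan_Suc_atMost)
    define w where "w = (\<lambda>r i. yt k p (ts r) i - yt k p (ts 0) i)"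
    have indw: "indep k w"
      unfolding indep_def
    proof (intro allI impI ballI)
      fix c :: "nat \<Rightarrow> real" and r0
      assume H: "\<forall>i. (\<Sum>r\<in>{1..k}. c r * w r i) = 0" and r0: "r0 \<in> {1..k}"
      define C where "C = (\<lambda>j. \<Sum>r\<in>{1..k}. c r * ((ts r ^ j - ts 0 ^ j) / real k))"
      have "\<forall>i. (\<Sum>j\<in>{1..k}. C j * (p j i - p 0 i)) = 0"
      proof
        fix i
        have "(\<Sum>r\<in>{1..k}. c r * w r i)
            = (\<Sum>r\<in>{1..k}. \<Sum>j\<in>{1..k}. c r * (((ts r ^ j - ts 0 ^ j) / real k) * (p j i - p 0 i)))"
          by (simp add: w_def yt_diff sum_distrib_left)
        also have "\<dots> = (\<Sum>j\<in>{1..k}. C j * (p j i - p 0 i))"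
          by (subst sum.swap) (simp add: C_def sum_distrib_right mult.assoc)
        finally show "(\<Sum>j\<in>{1..k}. C j * (p j i - p 0 i)) = 0" using H by simp
      qed
      then have C0: "\<forall>j\<in>{1..k}. C j = 0" using ai unfolding aff_indep_def by blast
      define c' where "c' = (\<lambda>r. if r = 0 then - (\<Sum>r'\<in>{1..k}. c r') else c r)"
      have "(\<Sum>r\<le>k. c' r * ts r ^ j) = 0" if j: "j \<le> k" for j
      proof -
        have "(\<Sum>r\<le>k. c' r * ts r ^ j) = c' 0 * ts 0 ^ j + (\<Sum>r\<in>{1..k}. c r * ts r ^ j)"
          by (simp add: split0 c'_def)
        also have "\<dots> = (\<Sum>r\<in>{1..k}. c r * (ts r ^ j - ts 0 ^ j))"
          by (simp add: c'_def sum_distrib_right right_diff_distrib sum_subtractf)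
        also have "\<dots> = real k * C j"
          by (simp add: C_def sum_distrib_left)
        also have "\<dots> = 0"
        proof (cases "j = 0")
          case True then show ?thesis by (simp add: C_def)
        next
          case False then show ?thesis using C0 j by simp
        qed
        finally show ?thesis .
      qed
      then have "c' r0 = 0" using vandermonde_zero[OF tsinj, of c' r0] r0 by auto
      then show "c r0 = 0" using r0 by (simp add: c'_def)
    qed
    have sig: "fst (\<sigma> m) < snd (\<sigma> m) \<and> snd (\<sigma> m) \<le> n" if "m < M" for m
      using pat_prop[OF yDs[OF ts0T] that] ts0f by (simp add: f_def)
    have weq: "w r (m * n + 1 + fst (\<sigma> m)) = w r (m * n + 1 + snd (\<sigma> m))"
      if "r \<le> k" "m < M" for r m
    proof -
      have e1: "a (fst (\<sigma> m)) + yt k p (ts r) (m * n + 1 + fst (\<sigma> m)) =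
             a (snd (\<sigma> m)) + yt k p (ts r) (m * n + 1 + snd (\<sigma> m))"
        using pat_prop[OF yDs[OF tsT[OF that(1)]] that(2)] tsf[OF that(1)] by (simp add: f_def)
      have e0: "a (fst (\<sigma> m)) + yt k p (ts 0) (m * n + 1 + fst (\<sigma> m)) =
             a (snd (\<sigma> m)) + yt k p (ts 0) (m * n + 1 + snd (\<sigma> m))"
        using pat_prop[OF yDs[OF ts0T] that(2)] ts0f by (simp add: f_def)
      show ?thesis using e1 e0 by (simp add: w_def)
    qed
    define e where "e = (\<lambda>m. m * n + 1 + snd (\<sigma> m))"
    define u where "u = (\<lambda>m. m * n + 1 + fst (\<sigma> m))"
    have ue: "u m < e m" if "m < M" for m using sig[OF that] by (simp add: u_def e_def)
    have ebnd: "m * n + 2 \<le> e m \<and> e m \<le> m * n + 1 + n" if "m < M" for m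
      using sig[OF that] by (simp add: e_def)
    have einj: "inj_on e {..<M}"
    proof (rule inj_onI, rule ccontr)
      fix x y assume x: "x \<in> {..<M}" and y: "y \<in> {..<M}" and exy: "e x = e y" and ne: "x \<noteq> y"
      have lt: "e m < e m'" if "m < m'" "m < M" "m' < M" for m m'
      proof -
        have "(m + 1) * n \<le> m' * n" using that by (intro mult_le_mono1) simp
        then show ?thesis using ebnd[OF that(2)] ebnd[OF that(3)] by simp
      qed
      show False using ne lt[of x y] lt[of y x] x y exy by (cases "x < y") auto
    qed
    define E where "E = e ` {..<M}"
    define F where "F = {1..s} - E"
    have Esub: "E \<subseteq> {1..s}"
    proof
      fix x assume "x \<in> E"
      then obtain m where m: "m < M" "x = e m" by (auto simp: E_def)
      have "(m + 1) * n \<le> M * n" using m by (intro mult_le_mono1) simp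
      then show "x \<in> {1..s}" using ebnd[OF m(1)] m by (simp add: s_def)
    qed
    have cE: "card E = M" using card_image[OF einj] by (simp add: E_def)
    have cF: "card F = s - M" unfolding F_def using card_Diff_subset[OF _ Esub] cE
      by (simp add: E_def)
    define R where "R = (\<lambda>r. sel (\<lambda>i. i \<in> F) id (w r))"
    have wsupp: "w r i = 0" if "r \<le> k" "i \<notin> {1..s}" for r i
      using D_support[OF yD[OF tsT[OF that(1)]] that(2)] D_support[OF yD[OF ts0T] that(2)]
      by (simp add: w_def)
    have indR: "indep k R"
      unfolding indep_def
    proof (intro allI impI)
      fix c :: "nat \<Rightarrow> real" assume H: "\<forall>i. (\<Sum>r\<in>{1..k}. c r * R r i) = 0"
      define z where "z = (\<lambda>i. \<Sum>r\<in>{1..k}. c r * w r i)"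
      have zF: "z i = 0" if "i \<in> F" for i
        using H[rule_format, of i] that by (simp add: z_def R_def sel_def)
      have zout: "z i = 0" if "i \<notin> {1..s}" for i
        unfolding z_def by (rule sum.neutral) (use wsupp that in auto)
      have zE: "z (e m) = z (u m)" if "m < M" for m
        unfolding z_def e_def u_def by (rule sum.cong) (use weq that in auto)
      have z0: "z i = 0" for i
      proof (induction i rule: less_induct)
        case (less i)
        show ?case
        proof (cases "i \<in> {1..s}")
          case False then show ?thesis by (rule zout)
        next
          case True
          show ?thesis
          proof (cases "i \<in> E")
            case False then show ?thesis using True by (intro zF) (simp add: F_def)
          next
            case True
            then obtain m where m: "m < M" "i = e m" by (auto simp: E_def)
            then show ?thesis using zE[OF m(1)] less[of "u m"] ue[OF m(1)] by simp
          qed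
        qed
      qed
      then have "\<forall>i. (\<Sum>r\<in>{1..k}. c r * w r i) = 0" by (simp add: z_def)
      then show "\<forall>r\<in>{1..k}. c r = 0" using indw unfolding indep_def by blast
    qed
    have "k \<le> card F"
      by (rule indep_card[OF indR]) (auto simp: F_def R_def sel_def)
    then show ?thesis using cF Ms by simp
  qed
  then show ?thesis by (simp add: k_def s_def)
qed


lemma ratio_bound:
  fixes x y :: real assumes "y \<ge> 1" "x \<ge> 0"
  shows "(x * y + 1 - x) / (x * y + 1) \<le> 1 - 1 / y + 1 / (x + 1)"
proof -
  have p: "x * y + 1 > 0" using assms by (simp add: add_nonneg_pos)
  have yp: "y > 0" using assms by simp
  have q: "y * (x * y + 1) > 0" using yp p by simp
  have "(x * y + 1 - x) / (x * y + 1) = 1 - x / (x * y + 1)" using p by (simp add: field_simps)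
  also have "x / (x * y + 1) = 1 / y - 1 / (y * (x * y + 1))" using p yp q by (simp add: field_simps)
  also have "1 / (y * (x * y + 1)) \<le> 1 / (x + 1)"
  proof (rule divide_left_mono)
    have "x * y \<ge> x" using assms by (simp add: mult_le_cancel_left1)
    moreover have "y * (x * y + 1) \<ge> x * y + 1" using assms p by (simp add: mult_le_cancel_right1)
    ultimately show "x + 1 \<le> y * (x * y + 1)" by linarith
  qed (use assms p in auto)
  finally show ?thesis by simp
qed

theorem proposition3:
  fixes a :: "nat \<Rightarrow> real" and n :: nat
  assumes "n \<ge> 1"
  shows "tropical_entropy a n \<le> 1 - 1 / real n"
proof -
  define u where "u = (\<lambda>s. real (d_seq a n s))"
  define L where "L = Inf ((\<lambda>s. u s / real s) ` {1..})"
  have lim: "(\<lambda>s. u s / real s) \<longlonglongrightarrow> L" unfolding L_def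
  proof (rule fekete)
    show "u (s + t) \<le> u s + u t" for s t using d_subadd[of a n s t] by (simp add: u_def)
    show "0 \<le> u s" for s by (simp add: u_def)
    show "u s \<le> real s" for s using d_le_s[of a n s] by (simp add: u_def)
  qed
  have te: "tropical_entropy a n = L"
    unfolding tropical_entropy_def using limI[OF lim] by (simp add: u_def)
  have bdd: "bdd_below ((\<lambda>s. u s / real s) ` {1..})"
    by (rule bdd_belowI[of _ 0]) (auto simp: u_def)
  have LM: "L \<le> 1 - 1 / real n + 1 / (real M + 1)" for M
  proof -
    have "L \<le> u (M * n + 1) / real (M * n + 1)"
      unfolding L_def by (rule cInf_lower[OF _ bdd], intro imageI) simp
    also have "\<dots> \<le> (real M * real n + 1 - real M) / real (M * n + 1)"
    proof (rule divide_right_mono)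
      have "real (d_seq a n (M * n + 1) + M) \<le> real (M * n + 1)"
        using d_bound[OF assms, of a M] by (simp only: of_nat_le_iff)
      then show "u (M * n + 1) \<le> real M * real n + 1 - real M" by (simp add: u_def)
    qed simp
    also have "(real M * real n + 1 - real M) / real (M * n + 1) \<le> 1 - 1 / real n + 1 / (real M + 1)"
      using ratio_bound[of "real n" "real M"] assms by (simp add: add.commute)
    finally show ?thesis .
  qed
  show ?thesis
  proof (rule ccontr)
    assume "\<not> ?thesis"
    then have "L - (1 - 1 / real n) > 0" using te by simp
    then obtain M where "inverse (real (Suc M)) < L - (1 - 1 / real n)"
      using reals_Archimedean by blast
    then show False using LM[of M] by (simp add: inverse_eq_divide add.commute)
  qed
qed

end
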